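(* For all retractable contracts $\rho,\sigma$: if the judgment $\vartriangleright\rho\dashv\sigma$ (with empty assumption set) is derivable in the formal system for compliance, then $\rho$ is compliant with $\sigma$.
   Context: Let $\mathcal N$ be a countable set of names and $\overline{\mathcal N}=\{\bar a\mid a\in\mathcal N\}$ a disjoint set of conames; $\alpha$ ranges over $\mathcal N\cup\overline{\mathcal N}$, with $\bar{\bar a}=a$. Retractable contracts are the closed expressions generated by $\sigma ::= \mathbf 1 \mid \sum_{i\in I} a_i.\sigma_i \ (\text{input}) \mid \sum_{i\in I}\bar a_i.\sigma_i\ (\text{retractable output}) \mid \bigoplus_{i\in I}\bar a_i.\sigma_i\ (\text{unretractable output}) \mid x \mid \mathsf{rec}\,x.\sigma$, where $I$ is non-empty and finite, names/conames in each choice are pairwise distinct, and $\sigma$ is not a variable in $\mathsf{rec}\,x.\sigma$. Choices are commutative; $\mathsf{rec}\,x.\sigma$ is identified with $\sigma[\mathsf{rec}\,x.\sigma/x]$. A unary $\bar a.\sigma$ may be read as either kind of output. Histories are stacks $\vec\gamma ::= [\,] \mid \vec\gamma:\sigma$ with $\sigma$ a retractable contract or the special symbol $\circ$. A contract with history is a pair $\langle\vec\gamma,\sigma\rangle$ with $\sigma$ a contract or $\circ$. Transitions: $\langle\vec\gamma,\alpha.\sigma+\sigma'\rangle\xrightarrow{\alpha}\langle\vec\gamma:\sigma',\sigma\rangle$ (for retractable choices, $+$ being input or retractable output sum); $\langle\vec\gamma,\bar a.\sigma\oplus\sigma'\rangle\xrightarrow{\tau}\langle\vec\gamma,\bar a.\sigma\rangle$;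 $\langle\vec\gamma,\alpha.\sigma\rangle\xrightarrow{\alpha}\langle\vec\gamma:\circ,\sigma\rangle$; $\langle\vec\gamma:\sigma',\sigma\rangle\xrightarrow{\mathsf{rb}}\langle\vec\gamma,\sigma'\rangle$. Client/server pairs $\langle\vec\delta,\rho\rangle\parallel\langle\vec\gamma,\sigma\rangle$ reduce by: (comm) if $\langle\vec\delta,\rho\rangle\xrightarrow{\alpha}\langle\vec\delta',\rho'\rangle$ and $\langle\vec\gamma,\sigma\rangle\xrightarrow{\bar\alpha}\langle\vec\gamma',\sigma'\rangle$ then the pair reduces to $\langle\vec\delta',\rho'\rangle\parallel\langle\vec\gamma',\sigma'\rangle$; ($\tau$) a $\tau$-transition of either component alone; (rbk) if both components do an $\mathsf{rb}$ transition and $\rho\neq\mathbf 1$, both roll back simultaneously; rule (rbk) applies only if neither (comm) nor ($\tau$) applies. Then $\langle\vec\delta,\rho\rangle$ is compliant with $\langle\vec\gamma,\sigma\rangle$ if whenever $\langle\vec\delta,\rho\rangle\parallel\langle\vec\gamma,\sigma\rangle$ reduces in finitely many steps to a pair $\langle\vec\delta',\rho'\rangle\parallel\langle\vec\gamma',\sigma'\rangle$ with no further reduction, we have $\rho'=\mathbf 1$. A contract $\rho$ is compliant with $\sigma$ if $\langle[\,],\rho\rangle$ is compliant with $\langle[\,],\sigma\rangle$. The formal system derives judgments $\Gamma\vartriangleright\rho\dashv\sigma$, $\Gamma$ a set of expressions $\rho'\dashv\sigma'$, as finite trees with rules (applied modulo fold/unfold of recursion): (Ax) $\Gamma\vartriangleright\mathbf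 1\dashv\sigma$; (Hyp) $\Gamma,\rho\dashv\sigma\vartriangleright\rho\dashv\sigma$; $(+,+)$ if $\rho=\sum_{i\in I}\alpha_i.\rho_i$, $\sigma=\sum_{j\in J}\bar\alpha_j.\sigma_j$ are retractable choices and $k\in I\cap J$, from $\Gamma,\rho\dashv\sigma\vartriangleright\rho_k\dashv\sigma_k$ infer $\Gamma\vartriangleright\rho\dashv\sigma$; $(\oplus,+)$ from $\Gamma,\bigoplus_{i\in I}\bar a_i.\rho_i\dashv\sum_{j\in I\cup J}a_j.\sigma_j\vartriangleright\rho_i\dashv\sigma_i$ for all $i\in I$ infer $\Gamma\vartriangleright\bigoplus_{i\in I}\bar a_i.\rho_i\dashv\sum_{j\in I\cup J}a_j.\sigma_j$; $(+,\oplus)$ symmetrically, from $\Gamma,\sum_{j\in I\cup J}a_j.\sigma_j\dashv\bigoplus_{i\in I}\bar a_i.\rho_i\vartriangleright\rho_i\dashv\sigma_i$ for all $i\in I$ infer $\Gamma\vartriangleright\sum_{j\in I\cup J}a_j.\sigma_j\dashv\bigoplus_{i\in I}\bar a_i.\rho_i$. *)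

theory Defs
  imports "HOL-Library.Finite_Map"
begin

text \<open>Retractable contracts, represented as the (regular) trees denoted by the
closed contractive recursive expressions; this builds in the identification of
rec x.s with its unfolding and the commutativity of choices.
Inp m = sum of inputs a.s_a (a in dom m); ROut m = retractable output sum;
UOut m = unretractable output sum.\<close>

codatatype 'n ctr =
    One
  | Inp "('n, 'n ctr) fmap"
  | ROut "('n, 'n ctr) fmap"
  | UOut "('n, 'n ctr) fmap"

fun children :: "'n ctr \<Rightarrow> 'n ctr set" where
  "children One = {}"
| "children (Inp m) = fmran' m"
| "children (ROut m) = fmran' m"
| "children (UOut m) = fmran' m"

inductive reach :: "'n ctr \<Rightarrow> 'n ctr \<Rightarrow> bool" where
  refl: "reach t t"
| step: "reach t s \<Longrightarrow> c \<in> children s \<Longrightarrow> reach t c"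

text \<open>Local well-formedness: choices are non-empty; a unary output is always
represented as ROut (an unretractable choice is a proper one, with at least
two branches), the unary one being readable as either kind in the rules below.\<close>
fun local_ok :: "'n ctr \<Rightarrow> bool" where
  "local_ok One = True"
| "local_ok (Inp m) = (fmdom' m \<noteq> {})"
| "local_ok (ROut m) = (fmdom' m \<noteq> {})"
| "local_ok (UOut m) = (card (fmdom' m) \<ge> 2)"

definition retractable_contract :: "'n ctr \<Rightarrow> bool" where
  "retractable_contract t \<longleftrightarrow>
     finite {s. reach t s} \<and> (\<forall>s. reach t s \<longrightarrow> local_ok s)"

abbreviation single :: "'n \<Rightarrow> 'n ctr \<Rightarrow> ('n, 'n ctr) fmap" where
  "single a s \<equiv> fmupd a s fmempty"

datatype 'n act = AIn 'n | AOut 'n | Tau | Rb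

fun dual :: "'n act \<Rightarrow> 'n act" where
  "dual (AIn a) = AOut a"
| "dual (AOut a) = AIn a"
| "dual Tau = Tau"
| "dual Rb = Rb"

text \<open>A contract with history: a stack (head of the list = top) of entries,
each a contract (Some) or the special symbol \<circ> (None), together with
a contract or \<circ>.\<close>
type_synonym 'n hstate = "'n ctr option list \<times> 'n ctr option"

inductive lts :: "'n hstate \<Rightarrow> 'n act \<Rightarrow> 'n hstate \<Rightarrow> bool" where
  inp_choice: "fmlookup m a = Some s \<Longrightarrow> card (fmdom' m) \<ge> 2 \<Longrightarrow>
     lts (h, Some (Inp m)) (AIn a) (Some (Inp (fmdrop a m)) # h, Some s)"
| rout_choice: "fmlookup m a = Some s \<Longrightarrow> card (fmdom' m) \<ge> 2 \<Longrightarrow>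
     lts (h, Some (ROut m)) (AOut a) (Some (ROut (fmdrop a m)) # h, Some s)"
| uout_tau: "fmlookup m a = Some s \<Longrightarrow> card (fmdom' m) \<ge> 2 \<Longrightarrow>
     lts (h, Some (UOut m)) Tau (h, Some (ROut (single a s)))"
| inp_prefix: "lts (h, Some (Inp (single a s))) (AIn a) (None # h, Some s)"
| out_prefix: "lts (h, Some (ROut (single a s))) (AOut a) (None # h, Some s)"
| rollback: "lts (x # h, r) Rb (h, x)"

inductive red0 :: "'n hstate \<times> 'n hstate \<Rightarrow> 'n hstate \<times> 'n hstate \<Rightarrow> bool" where
  comm: "lts c \<alpha> c' \<Longrightarrow> \<alpha> \<noteq> Tau \<Longrightarrow> \<alpha> \<noteq> Rb \<Longrightarrow> lts s (dual \<alpha>) s' \<Longrightarrow>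
     red0 (c, s) (c', s')"
| tau_client: "lts c Tau c' \<Longrightarrow> red0 (c, s) (c', s)"
| tau_server: "lts s Tau s' \<Longrightarrow> red0 (c, s) (c, s')"

definition red :: "'n hstate \<times> 'n hstate \<Rightarrow> 'n hstate \<times> 'n hstate \<Rightarrow> bool" where
  "red p q \<longleftrightarrow> red0 p q \<or>
     ((\<nexists>q'. red0 p q') \<and>
      (\<exists>c s c' s'. p = (c, s) \<and> q = (c', s') \<and> lts c Rb c' \<and> lts s Rb s' \<and>
                   snd c \<noteq> Some One))"

definition compliant_h :: "'n hstate \<Rightarrow> 'n hstate \<Rightarrow> bool" where
  "compliant_h c s \<longleftrightarrow>
     (\<forall>c' s'. red\<^sup>*\<^sup>* (c, s) (c', s') \<and> (\<nexists>q. red (c', s') q) \<longrightarrow> snd c' = Some One)"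

definition compliant :: "'n ctr \<Rightarrow> 'n ctr \<Rightarrow> bool" where
  "compliant \<rho> \<sigma> \<longleftrightarrow> compliant_h ([], Some \<rho>) ([], Some \<sigma>)"

fun unretr_out :: "'n ctr \<Rightarrow> ('n, 'n ctr) fmap option" where
  "unretr_out (UOut m) = Some m"
| "unretr_out (ROut m) = (if card (fmdom' m) = 1 then Some m else None)"
| "unretr_out _ = None"

text \<open>The formal system: derivable G r s  stands for  G |> r -| s.\<close>
inductive derivable :: "('n ctr \<times> 'n ctr) set \<Rightarrow> 'n ctr \<Rightarrow> 'n ctr \<Rightarrow> bool" where
  Ax: "derivable G One s"
| Hyp: "(r, s) \<in> G \<Longrightarrow> derivable G r s"
| PlusPlus_in_out: "fmlookup m k = Some r' \<Longrightarrow> fmlookup n k = Some s' \<Longrightarrow>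
     derivable (insert (Inp m, ROut n) G) r' s' \<Longrightarrow> derivable G (Inp m) (ROut n)"
| PlusPlus_out_in: "fmlookup m k = Some r' \<Longrightarrow> fmlookup n k = Some s' \<Longrightarrow>
     derivable (insert (ROut m, Inp n) G) r' s' \<Longrightarrow> derivable G (ROut m) (Inp n)"
| OplusPlus: "unretr_out r = Some m \<Longrightarrow> fmdom' m \<subseteq> fmdom' n \<Longrightarrow>
     (\<forall>i r' s'. fmlookup m i = Some r' \<longrightarrow> fmlookup n i = Some s' \<longrightarrow>
        derivable (insert (r, Inp n) G) r' s') \<Longrightarrow> derivable G r (Inp n)"
| PlusOplus: "unretr_out s = Some m \<Longrightarrow> fmdom' m \<subseteq> fmdom' n \<Longrightarrow>
     (\<forall>i r' s'. fmlookup n i = Some r' \<longrightarrow> fmlookup m i = Some s' \<longrightarrow>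
        derivable (insert (Inp n, s) G) r' s') \<Longrightarrow> derivable G (Inp n) s"

end

theory Submission
  imports Defs
begin

lemma deriv_weaken:
  "derivable G r s \<Longrightarrow> G \<subseteq> G' \<Longrightarrow> derivable G' r s"
proof (induction arbitrary: G' rule: derivable.induct)
  case (Ax G s) show ?case by (rule derivable.Ax)
next
  case (Hyp r s G) then show ?case by (blast intro: derivable.Hyp)
next
  case (PlusPlus_in_out m k r' n s' G)
  then show ?case by (blast intro: derivable.PlusPlus_in_out)
next
  case (PlusPlus_out_in m k r' n s' G)
  then show ?case by (blast intro: derivable.PlusPlus_out_in)
next
  case (OplusPlus r m n G)
  then show ?case by (intro derivable.OplusPlus) blast+
next
  case (PlusOplus s m n G)
  then show ?case by (intro derivable.PlusOplus) blast+
qed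

lemma deriv_subst:
  "derivable G' r s \<Longrightarrow> G' \<subseteq> insert (a, b) G \<Longrightarrow> derivable G a b \<Longrightarrow> derivable G r s"
proof (induction arbitrary: G rule: derivable.induct)
  case (Ax G s) show ?case by (rule derivable.Ax)
next
  case (Hyp r s G')
  then have "(r,s) = (a,b) \<or> (r,s) \<in> G" by blast
  then show ?case
  proof
    assume "(r,s) = (a,b)" then show ?case using Hyp.prems(2) by simp
  next
    assume "(r,s) \<in> G" then show ?case by (rule derivable.Hyp)
  qed
next
  case (PlusPlus_in_out m k r' n s' G')
  have 1: "derivable (insert (Inp m, ROut n) G) a b"
    using PlusPlus_in_out.prems(2) by (rule deriv_weaken) blast
  have 2: "insert (Inp m, ROut n) G' \<subseteq> insert (a, b) (insert (Inp m, ROut n) G)"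
    using PlusPlus_in_out.prems(1) by blast
  have "derivable (insert (Inp m, ROut n) G) r' s'"
    by (rule PlusPlus_in_out.IH[OF 2 1])
  then show ?case by (rule derivable.PlusPlus_in_out[OF PlusPlus_in_out.hyps(1,2)])
next
  case (PlusPlus_out_in m k r' n s' G')
  have 1: "derivable (insert (ROut m, Inp n) G) a b"
    using PlusPlus_out_in.prems(2) by (rule deriv_weaken) blast
  have 2: "insert (ROut m, Inp n) G' \<subseteq> insert (a, b) (insert (ROut m, Inp n) G)"
    using PlusPlus_out_in.prems(1) by blast
  have "derivable (insert (ROut m, Inp n) G) r' s'"
    by (rule PlusPlus_out_in.IH[OF 2 1])
  then show ?case by (rule derivable.PlusPlus_out_in[OF PlusPlus_out_in.hyps(1,2)])
next
  case (OplusPlus r m n G')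
  have 1: "derivable (insert (r, Inp n) G) a b"
    using OplusPlus.prems(2) by (rule deriv_weaken) blast
  have 2: "insert (r, Inp n) G' \<subseteq> insert (a, b) (insert (r, Inp n) G)"
    using OplusPlus.prems(1) by blast
  show ?case
  proof (rule derivable.OplusPlus[OF OplusPlus.hyps(1,2)], intro allI impI)
    fix i r' s' assume "fmlookup m i = Some r'" "fmlookup n i = Some s'"
    then have "\<forall>Ga. insert (r, Inp n) G' \<subseteq> insert (a, b) Ga \<longrightarrow> derivable Ga a b \<longrightarrow> derivable Ga r' s'"
      using OplusPlus.IH by blast
    then show "derivable (insert (r, Inp n) G) r' s'" using 1 2 by blast
  qed
next
  case (PlusOplus s m n G')
  have 1: "derivable (insert (Inp n, s) G) a b"
    using PlusOplus.prems(2) by (rule deriv_weaken) blast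
  have 2: "insert (Inp n, s) G' \<subseteq> insert (a, b) (insert (Inp n, s) G)"
    using PlusOplus.prems(1) by blast
  show ?case
  proof (rule derivable.PlusOplus[OF PlusOplus.hyps(1,2)], intro allI impI)
    fix i r' s' assume "fmlookup n i = Some r'" "fmlookup m i = Some s'"
    then have "\<forall>Ga. insert (Inp n, s) G' \<subseteq> insert (a, b) Ga \<longrightarrow> derivable Ga a b \<longrightarrow> derivable Ga r' s'"
      using PlusOplus.IH by blast
    then show "derivable (insert (Inp n, s) G) r' s'" using 1 2 by blast
  qed
qed

lemma deriv_self:
  "derivable (insert (r, s) {}) a b \<Longrightarrow> derivable {} r s \<Longrightarrow> derivable {} a b"
  by (rule deriv_subst) auto

definition W :: "'n ctr \<Rightarrow> bool" where
  "W t \<longleftrightarrow> (\<forall>s. reach t s \<longrightarrow> local_ok s)"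

lemma reach_trans: "reach c x \<Longrightarrow> reach t c \<Longrightarrow> reach t x"
  by (induction rule: reach.induct) (auto intro: reach.step)

lemma W_child: "W t \<Longrightarrow> c \<in> children t \<Longrightarrow> W c"
  unfolding W_def by (meson reach.refl reach.step reach_trans)

lemma W_local: "W t \<Longrightarrow> local_ok t"
  unfolding W_def by (simp add: reach.refl)

definition Good :: "'n ctr \<Rightarrow> 'n ctr \<Rightarrow> bool" where
  "Good r s \<longleftrightarrow> derivable {} r s \<and> W r \<and> W s"

definition Retry :: "'n ctr \<Rightarrow> 'n ctr \<Rightarrow> bool" where
  "Retry c s \<longleftrightarrow>
    (\<exists>m n k r' s'. c = Inp m \<and> s = ROut n \<and> fmlookup m k = Some r' \<and> fmlookup n k = Some s' \<and> Good r' s') \<or>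
    (\<exists>m n k r' s'. c = ROut m \<and> s = Inp n \<and> fmlookup m k = Some r' \<and> fmlookup n k = Some s' \<and> Good r' s')"

lemma RetryI1: "fmlookup m k = Some r' \<Longrightarrow> fmlookup n k = Some s' \<Longrightarrow> Good r' s' \<Longrightarrow> Retry (Inp m) (ROut n)"
  unfolding Retry_def by blast
lemma RetryI2: "fmlookup m k = Some r' \<Longrightarrow> fmlookup n k = Some s' \<Longrightarrow> Good r' s' \<Longrightarrow> Retry (ROut m) (Inp n)"
  unfolding Retry_def by blast

lemma card1_single:
  assumes "card (fmdom' m) = 1" "fmlookup m k = Some v"
  shows "m = single k v"
proof (rule fmap_ext)
  fix x
  have "k \<in> fmdom' m" using assms(2) by (rule fmdom'I)
  then have d: "fmdom' m = {k}" using assms(1) by (metis card_1_singletonE singletonD)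
  show "fmlookup m x = fmlookup (single k v) x"
  proof (cases "x = k")
    case True then show ?thesis using assms(2) by simp
  next
    case False then have "x \<notin> fmdom' m" using d by simp
    then show ?thesis using False by auto
  qed
qed

lemma dom_nonempty_single:
  assumes "card (fmdom' m) = 1"
  obtains a v where "fmlookup m a = Some v" "m = single a v"
proof -
  obtain a where "fmdom' m = {a}" using assms card_1_singletonE by blast
  then have "a \<in> fmdom' m" by simp
  then obtain v where l: "fmlookup m a = Some v" by (meson fmlookup_dom'_iff)
  show ?thesis using that[OF l card1_single[OF assms l]] .
qed

lemma W_Inp: "W (Inp m) \<Longrightarrow> fmlookup m a = Some v \<Longrightarrow> W v"
  by (erule W_child) (simp add: fmran'I)
lemma W_ROut: "W (ROut m) \<Longrightarrow> fmlookup m a = Some v \<Longrightarrow> W v"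
  by (erule W_child) (simp add: fmran'I)
lemma W_UOut: "W (UOut m) \<Longrightarrow> fmlookup m a = Some v \<Longrightarrow> W v"
  by (erule W_child) (simp add: fmran'I)

lemma unretr_W: "unretr_out r = Some m \<Longrightarrow> W r \<Longrightarrow> fmlookup m a = Some v \<Longrightarrow> W v"
  by (cases r) (auto split: if_splits intro: W_UOut W_ROut)

lemma good_cases:
  assumes "Good r s"
  shows "r = One \<or> Retry r s \<or>
    (\<exists>m n. r = UOut m \<and> s = Inp n \<and> card (fmdom' m) \<ge> 2 \<and>
        (\<forall>a r'. fmlookup m a = Some r' \<longrightarrow> Retry (ROut (single a r')) (Inp n))) \<or>
    (\<exists>m n. r = Inp n \<and> s = UOut m \<and> card (fmdom' m) \<ge> 2 \<and>
        (\<forall>a s'. fmlookup m a = Some s' \<longrightarrow> Retry (Inp n) (ROut (single a s'))))"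
proof -
  have d: "derivable {} r s" and wr: "W r" and ws: "W s" using assms by (auto simp: Good_def)
  from d show ?thesis
  proof (cases rule: derivable.cases)
    case Ax then show ?thesis by simp
  next
    case (Hyp) then show ?thesis by simp
  next
    case (PlusPlus_in_out m k r' n s')
    have "derivable (insert (r, s) {}) r' s'" using PlusPlus_in_out by simp
    then have "derivable {} r' s'" using d by (rule deriv_self)
    moreover have "W r'" using wr PlusPlus_in_out W_Inp by simp
    moreover have "W s'" using ws PlusPlus_in_out W_ROut by simp
    ultimately have "Good r' s'" by (simp add: Good_def)
    then have "Retry r s" using PlusPlus_in_out by (simp add: RetryI1)
    then show ?thesis by simp
  next
    case (PlusPlus_out_in m k r' n s')
    have "derivable (insert (r, s) {}) r' s'" using PlusPlus_out_in by simp
    then have "derivable {} r' s'" using d by (rule deriv_self)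
    moreover have "W r'" using wr PlusPlus_out_in W_ROut by simp
    moreover have "W s'" using ws PlusPlus_out_in W_Inp by simp
    ultimately have "Good r' s'" by (simp add: Good_def)
    then have "Retry r s" using PlusPlus_out_in by (simp add: RetryI2)
    then show ?thesis by simp
  next
    case (OplusPlus m n)
    have cont: "Good r' s'" if "fmlookup m a = Some r'" "fmlookup n a = Some s'" for a r' s'
    proof -
      have "derivable (insert (r, s) {}) r' s'" using OplusPlus that by simp
      then have "derivable {} r' s'" using d by (rule deriv_self)
      moreover have "W r'" using unretr_W[OF OplusPlus(2) wr that(1)] .
      moreover have "W s'" using ws OplusPlus(1) that(2) W_Inp by simp
      ultimately show ?thesis by (simp add: Good_def)
    qed
    have ex: "\<exists>s'. fmlookup n a = Some s'" if "fmlookup m a = Some r'" for a r'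
    proof -
      have "a \<in> fmdom' m" using that by (rule fmdom'I)
      then have "a \<in> fmdom' n" using OplusPlus(3) by (rule subsetD[rotated])
      then show ?thesis by (simp add: fmlookup_dom'_iff)
    qed
    have R: "Retry (ROut (single a r')) (Inp n)" if ma: "fmlookup m a = Some r'" for a r'
    proof -
      obtain s' where "fmlookup n a = Some s'" using ex[OF ma] by blast
      then show ?thesis using cont[OF ma] ma by (intro RetryI2[of _ a r' _ s']) simp_all
    qed
    show ?thesis
    proof (cases r)
      case (UOut x)
      then have "m = x" using OplusPlus(2) by simp
      moreover have "card (fmdom' x) \<ge> 2" using W_local[OF wr] UOut by simp
      ultimately have "\<exists>m n. r = UOut m \<and> s = Inp n \<and> card (fmdom' m) \<ge> 2 \<and>
        (\<forall>a r'. fmlookup m a = Some r' \<longrightarrow> Retry (ROut (single a r')) (Inp n))"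
        using UOut OplusPlus(1) R by auto
      then show ?thesis by blast
    next
      case (ROut x)
      then have mx: "m = x" and c1: "card (fmdom' m) = 1" using OplusPlus(2) by (auto split: if_splits)
      obtain a r' where l: "fmlookup m a = Some r'" and "m = single a r'"
        using dom_nonempty_single[OF c1] by blast
      then show ?thesis using R[OF l] ROut mx OplusPlus(1) by simp
    qed (use OplusPlus(2) in auto)
  next
    case (PlusOplus m n)
    have cont: "Good r' s'" if "fmlookup n a = Some r'" "fmlookup m a = Some s'" for a r' s'
    proof -
      have "derivable (insert (r, s) {}) r' s'" using PlusOplus that by simp
      then have "derivable {} r' s'" using d by (rule deriv_self)
      moreover have "W s'" using unretr_W[OF PlusOplus(2) ws that(2)] .
      moreover have "W r'" using wr PlusOplus(1) that(1) W_Inp by simp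
      ultimately show ?thesis by (simp add: Good_def)
    qed
    have ex: "\<exists>r'. fmlookup n a = Some r'" if "fmlookup m a = Some s'" for a s'
    proof -
      have "a \<in> fmdom' m" using that by (rule fmdom'I)
      then have "a \<in> fmdom' n" using PlusOplus(3) by (rule subsetD[rotated])
      then show ?thesis by (simp add: fmlookup_dom'_iff)
    qed
    have R: "Retry (Inp n) (ROut (single a s'))" if ma: "fmlookup m a = Some s'" for a s'
    proof -
      obtain r' where "fmlookup n a = Some r'" using ex[OF ma] by blast
      then show ?thesis using cont[OF _ ma] ma by (intro RetryI1[of _ a r' _ s']) simp_all
    qed
    show ?thesis
    proof (cases s)
      case (UOut x)
      then have "m = x" using PlusOplus(2) by simp
      moreover have "card (fmdom' x) \<ge> 2" using W_local[OF ws] UOut by simp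
      ultimately have "\<exists>m n. r = Inp n \<and> s = UOut m \<and> card (fmdom' m) \<ge> 2 \<and>
        (\<forall>a s'. fmlookup m a = Some s' \<longrightarrow> Retry (Inp n) (ROut (single a s')))"
        using UOut PlusOplus(1) R by auto
      then show ?thesis by blast
    next
      case (ROut x)
      then have mx: "m = x" and c1: "card (fmdom' m) = 1" using PlusOplus(2) by (auto split: if_splits)
      obtain a s' where l: "fmlookup m a = Some s'" and "m = single a s'"
        using dom_nonempty_single[OF c1] by blast
      then show ?thesis using R[OF l] ROut mx PlusOplus(1) by simp
    qed (use PlusOplus(2) in auto)
  qed
qed

lemma lts_Inp: "lts p \<alpha> q \<Longrightarrow> p = (h, Some (Inp m)) \<Longrightarrow> \<alpha> = Rb \<or>
   (\<exists>a v. \<alpha> = AIn a \<and> fmlookup m a = Some v \<and>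
     ((2 \<le> card (fmdom' m) \<and> q = (Some (Inp (fmdrop a m)) # h, Some v)) \<or>
      (m = single a v \<and> q = (None # h, Some v))))"
  by (erule lts.cases) auto

lemma lts_ROut: "lts p \<alpha> q \<Longrightarrow> p = (h, Some (ROut m)) \<Longrightarrow> \<alpha> = Rb \<or>
   (\<exists>a v. \<alpha> = AOut a \<and> fmlookup m a = Some v \<and>
     ((2 \<le> card (fmdom' m) \<and> q = (Some (ROut (fmdrop a m)) # h, Some v)) \<or>
      (m = single a v \<and> q = (None # h, Some v))))"
  by (erule lts.cases) auto

lemma lts_UOut: "lts p \<alpha> q \<Longrightarrow> p = (h, Some (UOut m)) \<Longrightarrow> \<alpha> = Rb \<or>
   (\<alpha> = Tau \<and> (\<exists>a v. fmlookup m a = Some v \<and> q = (h, Some (ROut (single a v)))))"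
  by (erule lts.cases) auto

lemma lts_One: "lts p \<alpha> q \<Longrightarrow> p = (h, Some One) \<Longrightarrow> \<alpha> = Rb"
  by (erule lts.cases) auto

lemma lts_hist_vis: "lts p \<alpha> q \<Longrightarrow> \<alpha> \<noteq> Rb \<Longrightarrow> \<alpha> \<noteq> Tau \<Longrightarrow> \<exists>e. fst q = e # fst p"
  by (erule lts.cases) auto

lemma lts_hist_tau: "lts p Tau q \<Longrightarrow> fst q = fst p"
  by (erule lts.cases) auto

lemma lts_Rb: "lts p Rb q \<Longrightarrow> \<exists>e h. fst p = e # h \<and> q = (h, e)"
  by (erule lts.cases) auto

lemma dual_ne: "\<alpha> \<noteq> Tau \<Longrightarrow> \<alpha> \<noteq> Rb \<Longrightarrow> dual \<alpha> \<noteq> Tau \<and> dual \<alpha> \<noteq> Rb"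
  by (cases \<alpha>) auto

lemma card_ge1: "fmlookup m k = Some v \<Longrightarrow> card (fmdom' m) \<ge> 1"
proof -
  assume "fmlookup m k = Some v"
  then have "k \<in> fmdom' m" by (rule fmdom'I)
  then have "fmdom' m \<noteq> {}" by blast
  moreover have "finite (fmdom' m)" by simp
  ultimately show ?thesis by (simp add: Suc_le_eq card_gt_0_iff)
qed

lemma ex_lts_Inp: "fmlookup m k = Some v \<Longrightarrow> \<exists>q. lts (h, Some (Inp m)) (AIn k) q"
proof -
  assume l: "fmlookup m k = Some v"
  show ?thesis
  proof (cases "card (fmdom' m) \<ge> 2")
    case True then show ?thesis using lts.inp_choice[OF l True] by blast
  next
    case False
    then have "card (fmdom' m) = 1" using card_ge1[OF l] by simp
    then have "m = single k v" using l by (rule card1_single)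
    then show ?thesis using lts.inp_prefix[of h k v] by auto
  qed
qed

lemma ex_lts_ROut: "fmlookup m k = Some v \<Longrightarrow> \<exists>q. lts (h, Some (ROut m)) (AOut k) q"
proof -
  assume l: "fmlookup m k = Some v"
  show ?thesis
  proof (cases "card (fmdom' m) \<ge> 2")
    case True then show ?thesis using lts.rout_choice[OF l True] by blast
  next
    case False
    then have "card (fmdom' m) = 1" using card_ge1[OF l] by simp
    then have "m = single k v" using l by (rule card1_single)
    then show ?thesis using lts.out_prefix[of h k v] by auto
  qed
qed

definition Inv :: "'n hstate \<Rightarrow> 'n hstate \<Rightarrow> bool" where
  "Inv c s \<longleftrightarrow> snd c = Some One \<or>
     (\<exists>x y. snd c = Some x \<and> snd s = Some y \<and> (Good x y \<or> Retry x y)) \<or>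
     (\<exists>i x y. i < length (fst c) \<and> i < length (fst s) \<and> fst c ! i = Some x \<and>
        fst s ! i = Some y \<and> Retry x y)"

lemma retry_red0: "Retry x y \<Longrightarrow> \<exists>q. red0 ((hc, Some x), (hs, Some y)) q"
  unfolding Retry_def
proof (elim disjE exE conjE)
  fix m n k r' s' assume x: "x = Inp m" and y: "y = ROut n" and lk: "fmlookup m k = Some r'" and ln: "fmlookup n k = Some s'"
  obtain c2 where 1: "lts (hc, Some (Inp m)) (AIn k) c2" using ex_lts_Inp[OF lk] by blast
  obtain s2 where 2: "lts (hs, Some (ROut n)) (AOut k) s2" using ex_lts_ROut[OF ln] by blast
  have "red0 ((hc, Some (Inp m)), (hs, Some (ROut n))) (c2, s2)"
    by (rule red0.comm[OF 1]) (simp_all add: 2)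
  then show ?thesis unfolding x y by blast
next
  fix m n k r' s' assume x: "x = ROut m" and y: "y = Inp n" and lk: "fmlookup m k = Some r'" and ln: "fmlookup n k = Some s'"
  obtain c2 where 1: "lts (hc, Some (ROut m)) (AOut k) c2" using ex_lts_ROut[OF lk] by blast
  obtain s2 where 2: "lts (hs, Some (Inp n)) (AIn k) s2" using ex_lts_Inp[OF ln] by blast
  have "red0 ((hc, Some (ROut m)), (hs, Some (Inp n))) (c2, s2)"
    by (rule red0.comm[OF 1]) (simp_all add: 2)
  then show ?thesis unfolding x y by blast
qed

lemma card2_ex: "card (fmdom' m) \<ge> 2 \<Longrightarrow> \<exists>a v. fmlookup m a = Some v"
proof -
  assume "card (fmdom' m) \<ge> 2"
  then have "fmdom' m \<noteq> {}" by auto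
  then obtain a where "a \<in> fmdom' m" by blast
  then show ?thesis by (auto simp: fmlookup_dom'_iff)
qed

lemma alive_red0: "Good x y \<or> Retry x y \<Longrightarrow> x \<noteq> One \<Longrightarrow> \<exists>q. red0 ((hc, Some x), (hs, Some y)) q"
proof -
  assume a: "Good x y \<or> Retry x y" and x1: "x \<noteq> One"
  have "Retry x y \<or>
    (\<exists>m n. x = UOut m \<and> y = Inp n \<and> card (fmdom' m) \<ge> 2) \<or>
    (\<exists>m n. x = Inp n \<and> y = UOut m \<and> card (fmdom' m) \<ge> 2)"
    using good_cases[of x y] a x1 by auto
  then show ?thesis
  proof (elim disjE exE conjE)
    assume "Retry x y" then show ?thesis by (rule retry_red0)
  next
    fix m n assume "x = UOut m" "y = Inp n" "card (fmdom' m) \<ge> 2"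
    then obtain a v where "fmlookup m a = Some v" using card2_ex by blast
    then have "lts (hc, Some x) Tau (hc, Some (ROut (single a v)))"
      using \<open>x = UOut m\<close> \<open>card (fmdom' m) \<ge> 2\<close> by (simp add: lts.uout_tau)
    then show ?thesis using red0.tau_client by blast
  next
    fix m n assume "x = Inp n" "y = UOut m" "card (fmdom' m) \<ge> 2"
    then obtain a v where "fmlookup m a = Some v" using card2_ex by blast
    then have "lts (hs, Some y) Tau (hs, Some (ROut (single a v)))"
      using \<open>y = UOut m\<close> \<open>card (fmdom' m) \<ge> 2\<close> by (simp add: lts.uout_tau)
    then show ?thesis using red0.tau_server by blast
  qed
qed

lemma retry_step:
  assumes R: "Retry x y" and r: "red0 ((hc, Some x), (hs, Some y)) (c', s')"
  shows "Inv c' s'"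
  using R unfolding Retry_def
proof (elim disjE exE conjE)
  fix m n k r' s2 assume x: "x = Inp m" and y: "y = ROut n" and lk: "fmlookup m k = Some r'"
    and ln: "fmlookup n k = Some s2" and G: "Good r' s2"
  from r show ?thesis
  proof (cases rule: red0.cases)
    case (comm \<alpha>)
    from lts_Inp[OF comm(1)] x comm(2,3) obtain a v where
      a: "\<alpha> = AIn a" "fmlookup m a = Some v" and
      cc: "(2 \<le> card (fmdom' m) \<and> c' = (Some (Inp (fmdrop a m)) # hc, Some v)) \<or>
           (m = single a v \<and> c' = (None # hc, Some v))" by blast
    from lts_ROut[OF comm(4)] y a(1) obtain w where
      w: "fmlookup n a = Some w" and
      ss: "(2 \<le> card (fmdom' n) \<and> s' = (Some (ROut (fmdrop a n)) # hs, Some w)) \<or>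
           (n = single a w \<and> s' = (None # hs, Some w))" by auto
    show ?thesis
    proof (cases "a = k")
      case True
      then have "snd c' = Some r'" "snd s' = Some s2" using cc ss a lk ln w by auto
      then show ?thesis using G unfolding Inv_def by blast
    next
      case False
      then have c': "c' = (Some (Inp (fmdrop a m)) # hc, Some v)" using cc lk by auto
      have s': "s' = (Some (ROut (fmdrop a n)) # hs, Some w)" using ss ln False by auto
      have "Retry (Inp (fmdrop a m)) (ROut (fmdrop a n))"
        using lk ln G False by (intro RetryI1[of _ k r' _ s2]) auto
      then show ?thesis unfolding Inv_def using c' s' by force
    qed
  next
    case tau_client
    then have "lts (hc, Some (Inp m)) Tau c'" using x by simp
    from lts_Inp[OF this HOL.refl] show ?thesis by simp
  next
    case tau_server
    then have "lts (hs, Some (ROut n)) Tau s'" using y by simp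
    from lts_ROut[OF this HOL.refl] show ?thesis by simp
  qed
next
  fix m n k r' s2 assume x: "x = ROut m" and y: "y = Inp n" and lk: "fmlookup m k = Some r'"
    and ln: "fmlookup n k = Some s2" and G: "Good r' s2"
  from r show ?thesis
  proof (cases rule: red0.cases)
    case (comm \<alpha>)
    from lts_ROut[OF comm(1)] x comm(2,3) obtain a v where
      a: "\<alpha> = AOut a" "fmlookup m a = Some v" and
      cc: "(2 \<le> card (fmdom' m) \<and> c' = (Some (ROut (fmdrop a m)) # hc, Some v)) \<or>
           (m = single a v \<and> c' = (None # hc, Some v))" by blast
    from lts_Inp[OF comm(4)] y a(1) obtain w where
      w: "fmlookup n a = Some w" and
      ss: "(2 \<le> card (fmdom' n) \<and> s' = (Some (Inp (fmdrop a n)) # hs, Some w)) \<or>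
           (n = single a w \<and> s' = (None # hs, Some w))" by auto
    show ?thesis
    proof (cases "a = k")
      case True
      then have "snd c' = Some r'" "snd s' = Some s2" using cc ss a lk ln w by auto
      then show ?thesis using G unfolding Inv_def by blast
    next
      case False
      then have c': "c' = (Some (ROut (fmdrop a m)) # hc, Some v)" using cc lk by auto
      have s': "s' = (Some (Inp (fmdrop a n)) # hs, Some w)" using ss ln False by auto
      have "Retry (ROut (fmdrop a m)) (Inp (fmdrop a n))"
        using lk ln G False by (intro RetryI2[of _ k r' _ s2]) auto
      then show ?thesis unfolding Inv_def using c' s' by force
    qed
  next
    case tau_client
    then have "lts (hc, Some (ROut m)) Tau c'" using x by simp
    from lts_ROut[OF this HOL.refl] show ?thesis by simp
  next
    case tau_server
    then have "lts (hs, Some (Inp n)) Tau s'" using y by simp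
    from lts_Inp[OF this HOL.refl] show ?thesis by simp
  qed
qed

lemma alive_step:
  assumes A: "Good x y \<or> Retry x y" and x1: "x \<noteq> One"
    and r: "red0 ((hc, Some x), (hs, Some y)) (c', s')"
  shows "Inv c' s'"
proof -
  have "Retry x y \<or>
    (\<exists>m n. x = UOut m \<and> y = Inp n \<and> card (fmdom' m) \<ge> 2 \<and>
        (\<forall>a r'. fmlookup m a = Some r' \<longrightarrow> Retry (ROut (single a r')) (Inp n))) \<or>
    (\<exists>m n. x = Inp n \<and> y = UOut m \<and> card (fmdom' m) \<ge> 2 \<and>
        (\<forall>a s'. fmlookup m a = Some s' \<longrightarrow> Retry (Inp n) (ROut (single a s'))))"
    using A x1 good_cases by blast
  then show ?thesis
  proof (elim disjE exE conjE)
    assume "Retry x y" then show ?thesis using r by (rule retry_step)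
  next
    fix m n assume x: "x = UOut m" and y: "y = Inp n"
      and R: "\<forall>a r'. fmlookup m a = Some r' \<longrightarrow> Retry (ROut (single a r')) (Inp n)"
    from r show ?thesis
    proof (cases rule: red0.cases)
      case (comm \<alpha>)
      then have "lts (hc, Some (UOut m)) \<alpha> c'" using x by simp
      from lts_UOut[OF this HOL.refl] show ?thesis using comm by simp
    next
      case tau_client
      then have "lts (hc, Some (UOut m)) Tau c'" using x by simp
      from lts_UOut[OF this HOL.refl] obtain a v where "fmlookup m a = Some v" "c' = (hc, Some (ROut (single a v)))"
        by auto
      then show ?thesis using R y tau_client unfolding Inv_def by auto
    next
      case tau_server
      then have "lts (hs, Some (Inp n)) Tau s'" using y by simp
      from lts_Inp[OF this HOL.refl] show ?thesis by simp
    qed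
  next
    fix m n assume x: "x = Inp n" and y: "y = UOut m"
      and R: "\<forall>a s'. fmlookup m a = Some s' \<longrightarrow> Retry (Inp n) (ROut (single a s'))"
    from r show ?thesis
    proof (cases rule: red0.cases)
      case (comm \<alpha>)
      then have "lts (hs, Some (UOut m)) (dual \<alpha>) s'" using y by simp
      from lts_UOut[OF this HOL.refl] show ?thesis using dual_ne[OF comm(2,3)] by auto
    next
      case tau_client
      then have "lts (hc, Some (Inp n)) Tau c'" using x by simp
      from lts_Inp[OF this HOL.refl] show ?thesis by simp
    next
      case tau_server
      then have "lts (hs, Some (UOut m)) Tau s'" using y by simp
      from lts_UOut[OF this HOL.refl] obtain a v where "fmlookup m a = Some v" "s' = (hs, Some (ROut (single a v)))"
        by auto
      then show ?thesis using R x tau_server unfolding Inv_def by auto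
    qed
  qed
qed

lemma one_step:
  assumes o: "snd c = Some One" and r: "red (c, s) (c', s')"
  shows "snd c' = Some One"
proof -
  obtain hc where c: "c = (hc, Some One)" using o by (cases c) simp
  have "red0 (c, s) (c', s')" using r o unfolding red_def by auto
  then show ?thesis
  proof (cases rule: red0.cases)
    case (comm \<alpha>)
    have "\<alpha> = Rb" using lts_One[OF comm(1) c] .
    then show ?thesis using comm by simp
  next
    case tau_client
    show ?thesis using lts_One[OF tau_client(2) c] by simp
  next
    case tau_server then show ?thesis using o by simp
  qed
qed

lemma frame_step:
  assumes i: "i < length (fst c)" "i < length (fst s)" "fst c ! i = Some x" "fst s ! i = Some y"
    and R: "Retry x y" and r: "red (c, s) (c', s')"
  shows "Inv c' s'"
proof -
  have W3: "Inv c2 s2" if "j < length (fst c2)" "j < length (fst s2)" "fst c2 ! j = Some x" "fst s2 ! j = Some y" for j c2 s2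
    using that R unfolding Inv_def by blast
  from r consider (r0) "red0 (c, s) (c', s')" | (rb) "lts c Rb c'" "lts s Rb s'"
    unfolding red_def by auto
  then show ?thesis
  proof cases
    case r0
    then show ?thesis
    proof (cases rule: red0.cases)
      case (comm \<alpha>)
      obtain e where e: "fst c' = e # fst c" using lts_hist_vis[OF comm(1) comm(3) comm(2)] by blast
      obtain f where f: "fst s' = f # fst s" using lts_hist_vis[OF comm(4)] dual_ne[OF comm(2,3)] by blast
      show ?thesis by (rule W3[of "Suc i"]) (use i e f in simp_all)
    next
      case tau_client
      have "fst c' = fst c" using lts_hist_tau[OF tau_client(2)] .
      then show ?thesis using tau_client i by (intro W3[of i]) simp_all
    next
      case tau_server
      have "fst s' = fst s" using lts_hist_tau[OF tau_server(2)] .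
      then show ?thesis using tau_server i by (intro W3[of i]) simp_all
    qed
  next
    case rb
    obtain e h where e: "fst c = e # h" "c' = (h, e)" using lts_Rb[OF rb(1)] by blast
    obtain f h' where f: "fst s = f # h'" "s' = (h', f)" using lts_Rb[OF rb(2)] by blast
    show ?thesis
    proof (cases i)
      case 0
      then have "e = Some x" "f = Some y" using i e f by simp_all
      then show ?thesis using e f R unfolding Inv_def by auto
    next
      case (Suc j)
      show ?thesis by (rule W3[of j]) (use i e f Suc in simp_all)
    qed
  qed
qed

lemma inv_step:
  assumes I: "Inv c s" and r: "red (c, s) (c', s')"
  shows "Inv c' s'"
proof -
  from I consider (one) "snd c = Some One"
    | (alive) x y where "snd c = Some x" "snd s = Some y" "Good x y \<or> Retry x y" "x \<noteq> One"
    | (frame) i x y where "i < length (fst c)" "i < length (fst s)" "fst c ! i = Some x"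
        "fst s ! i = Some y" "Retry x y"
    unfolding Inv_def by blast
  then show ?thesis
  proof cases
    case one then show ?thesis using one_step[OF _ r] unfolding Inv_def by blast
  next
    case alive
    obtain hc hs where c: "c = (hc, Some x)" and s: "s = (hs, Some y)"
      using alive(1,2) by (cases c, cases s) auto
    have "\<exists>q. red0 (c, s) q" using alive_red0[OF alive(3,4)] c s by simp
    then have "red0 (c, s) (c', s')" using r unfolding red_def by blast
    then show ?thesis using alive_step[OF alive(3,4)] c s by simp
  next
    case frame then show ?thesis using frame_step r by blast
  qed
qed

lemma inv_reach:
  assumes "red\<^sup>*\<^sup>* p q" "Inv (fst p) (snd p)"
  shows "Inv (fst q) (snd q)"
  using assms
proof (induction rule: rtranclp_induct)
  case base then show ?case .
next
  case (step q r)
  have "red (fst q, snd q) (fst r, snd r)" using step(2) by simp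
  then show ?case using inv_step step(3,4) by blast
qed

lemma inv_stuck:
  assumes I: "Inv c s" and st: "\<nexists>q. red (c, s) q"
  shows "snd c = Some One"
proof (rule ccontr)
  assume n1: "snd c \<noteq> Some One"
  from I n1 consider
      (alive) x y where "snd c = Some x" "snd s = Some y" "Good x y \<or> Retry x y" "x \<noteq> One"
    | (frame) i x y where "i < length (fst c)" "i < length (fst s)" "fst c ! i = Some x"
        "fst s ! i = Some y" "Retry x y"
    unfolding Inv_def by blast
  then show False
  proof cases
    case alive
    obtain hc hs where c: "c = (hc, Some x)" and s: "s = (hs, Some y)"
      using alive(1,2) by (cases c, cases s) auto
    have "\<exists>q. red0 (c, s) q" using alive_red0[OF alive(3,4)] c s by simp
    then obtain q where "red0 (c, s) q" by blast
    then show False using st unfolding red_def by blast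
  next
    case frame
    obtain e h where ce: "fst c = e # h" using frame(1) by (cases "fst c") auto
    obtain f h' where sf: "fst s = f # h'" using frame(2) by (cases "fst s") auto
    have l1: "lts c Rb (h, e)" using lts.rollback[of e h "snd c"] ce by (cases c) simp
    have l2: "lts s Rb (h', f)" using lts.rollback[of f h' "snd s"] sf by (cases s) simp
    show False
    proof (cases "\<exists>q. red0 (c, s) q")
      case True then show ?thesis using st unfolding red_def by blast
    next
      case False
      then have "red (c, s) ((h, e), (h', f))" unfolding red_def using l1 l2 n1 by blast
      then show ?thesis using st by blast
    qed
  qed
qed

theorem theorem2:
  fixes \<rho> \<sigma> :: "'n ctr"
  assumes "retractable_contract \<rho>" and "retractable_contract \<sigma>"
    and "derivable {} \<rho> \<sigma>"
  shows "compliant \<rho> \<sigma>"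
proof -
  have "Good \<rho> \<sigma>" using assms unfolding Good_def W_def retractable_contract_def by blast
  then have I0: "Inv ([], Some \<rho>) ([], Some \<sigma>)" unfolding Inv_def by auto
  show ?thesis
    unfolding compliant_def compliant_h_def
  proof (intro allI impI, elim conjE)
    fix c' s' assume r: "red\<^sup>*\<^sup>* (([], Some \<rho>), ([], Some \<sigma>)) (c', s')" and st: "\<nexists>q. red (c', s') q"
    have "Inv c' s'" using inv_reach[OF r] I0 by simp
    then show "snd c' = Some One" using inv_stuck st by blast
  qed
qed

end
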